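(* Let $\mathcal{A}$ be a Boolean relational structure with finite signature such that $c_0\in\langle\mathcal{A}\rangle$. If an $n$-ary Boolean relation $R\neq\emptyset$ is not 0-valid, then $c_1\in\langle\mathcal{A}\cup\{R\}\rangle_{\leq 1}$.
   Context: Domain $\{0,1\}$; $c_0=\{(0)\}$, $c_1=\{(1)\}$. A Boolean relation is 0-valid if it is invariant under the constant operation $0$ (i.e. for nonempty relations, it contains the all-$0$ tuple). $\langle\mathcal{A}\rangle$ is the set of relations pp-definable over $\mathcal{A}$ (formulas $\exists\bar y\,\bigwedge_i R_i(\mathbf{x}_i)$ with $R_i$ in $\mathcal{A}$ or equality). $\langle\mathcal{A}\cup\{R\}\rangle_{\leq 1}$ is the set of relations pp-definable over $\mathcal{A}\cup\{R\}$ using at most one atom with relation $R$. *)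

theory Defs
  imports Main
begin

text \<open>Boolean relations: sets of bool lists (False = 0, True = 1).
  A relation R has arity n if all its tuples have length n.\<close>

definition bool_rel :: "nat \<Rightarrow> bool list set \<Rightarrow> bool" where
  "bool_rel n R \<longleftrightarrow> (\<forall>t\<in>R. length t = n)"

definition c0 :: "bool list set" where "c0 = {[False]}"
definition c1 :: "bool list set" where "c1 = {[True]}"

text \<open>0-valid: invariant under the constant-0 operation.\<close>
definition zero_valid :: "nat \<Rightarrow> bool list set \<Rightarrow> bool" where
  "zero_valid n R \<longleftrightarrow> (R = {} \<or> replicate n False \<in> R)"

datatype atom = RelAt "bool list set" "nat list" | EqAt nat nat

fun holds :: "(nat \<Rightarrow> bool) \<Rightarrow> atom \<Rightarrow> bool" where
  "holds v (RelAt R xs) = (map v xs \<in> R)"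
| "holds v (EqAt i j) = (v i = v j)"

fun atom_over :: "bool list set set \<Rightarrow> atom \<Rightarrow> bool" where
  "atom_over A (RelAt R xs) = (R \<in> A)"
| "atom_over A (EqAt i j) = True"

fun uses_rel :: "bool list set \<Rightarrow> atom \<Rightarrow> bool" where
  "uses_rel R (RelAt S xs) = (S = R)"
| "uses_rel R (EqAt i j) = False"

text \<open>Relation defined by the pp-formula \<open>\<exists>y. \<And>phi\<close> with free variables
  0,...,k-1 (in this order); all other variables occurring in phi are existentially
  quantified.\<close>
definition pp_rel :: "nat \<Rightarrow> atom list \<Rightarrow> bool list set" where
  "pp_rel k phi = {map v [0..<k] | v. \<forall>a\<in>set phi. holds v a}"

definition pp_clone :: "bool list set set \<Rightarrow> bool list set set" where
  "pp_clone A = {S. \<exists>k phi. (\<forall>a\<in>set phi. atom_over A a) \<and> S = pp_rel k phi}"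

definition pp_clone_le1 :: "bool list set set \<Rightarrow> bool list set \<Rightarrow> bool list set set" where
  "pp_clone_le1 A R = {S. \<exists>k phi. (\<forall>a\<in>set phi. atom_over (insert R A) a)
      \<and> length (filter (uses_rel R) phi) \<le> 1 \<and> S = pp_rel k phi}"

end

theory Submission
  imports Defs
begin

lemma neg_closed_no_c0:
  assumes "\<forall>S\<in>A. \<forall>a\<in>S. map Not a \<in> S"
  shows "c0 \<notin> pp_clone A"
proof
  assume "c0 \<in> pp_clone A"
  then obtain k phi where ov: "\<forall>a\<in>set phi. atom_over A a" and eq: "c0 = pp_rel k phi"
    unfolding pp_clone_def by blast
  have "[False] \<in> pp_rel k phi" unfolding eq[symmetric] c0_def by simp
  then obtain v where mv: "[False] = map v [0..<k]" and hv: "\<forall>a\<in>set phi. holds v a"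
    unfolding pp_rel_def by (auto simp del: upt_Suc)
  have k: "k = 1" using arg_cong[OF mv, of length] by simp
  have "\<forall>a\<in>set phi. holds (Not \<circ> v) a"
  proof
    fix a assume a: "a \<in> set phi"
    show "holds (Not \<circ> v) a"
    proof (cases a)
      case (RelAt S xs)
      then have "S \<in> A" "map v xs \<in> S" using ov hv a by auto
      then have "map Not (map v xs) \<in> S" using assms by blast
      then show ?thesis using RelAt by simp
    next
      case (EqAt i j)
      then show ?thesis using hv a by auto
    qed
  qed
  then have "map (Not \<circ> v) [0..<k] \<in> pp_rel k phi" unfolding pp_rel_def by blast
  moreover have "v 0 = False" using mv k by simp
  ultimately have "[True] \<in> pp_rel k phi" using k by simp
  then have "[True] \<in> c0" using eq by simp
  then show False by (simp add: c0_def)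
qed

theorem lemma12:
  fixes A :: "bool list set set" and R :: "bool list set" and n :: nat
  assumes "finite A"
    and "\<forall>S\<in>A. \<exists>m. bool_rel m S"
    and "c0 \<in> pp_clone A"
    and "bool_rel n R"
    and "R \<noteq> {}"
    and "\<not> zero_valid n R"
  shows "c1 \<in> pp_clone_le1 A R"
proof -
  define idx :: "bool \<Rightarrow> nat" where "idx b = (if b then 0 else 1)" for b
  obtain t where tR: "t \<in> R" and tc: "map Not t \<notin> R \<or> \<not> (\<forall>S\<in>A-{R}. \<forall>a\<in>S. map Not a \<in> S)"
  proof (cases "\<exists>t\<in>R. map Not t \<notin> R")
    case True then show ?thesis using that by blast
  next
    case False
    from assms(5) obtain t where "t \<in> R" by blast
    moreover have "\<not> (\<forall>S\<in>A-{R}. \<forall>a\<in>S. map Not a \<in> S)"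
    proof
      assume "\<forall>S\<in>A-{R}. \<forall>a\<in>S. map Not a \<in> S"
      then have "\<forall>S\<in>A. \<forall>a\<in>S. map Not a \<in> S" using False by blast
      then show False using neg_closed_no_c0 assms(3) by blast
    qed
    ultimately show ?thesis using that by blast
  qed
  have tlen: "length t = n" using tR assms(4) by (simp add: bool_rel_def)
  have finS: "finite S" if "S \<in> A" for S
  proof -
    have "\<exists>m. bool_rel m S" using assms(2) that by (rule bspec)
    then obtain m where "bool_rel m S" by (rule exE)
    then have "S \<subseteq> {xs. length xs = m}" by (auto simp: bool_rel_def)
    moreover have "finite {xs :: bool list. length xs = m}"
      using finite_lists_length_eq[of "UNIV :: bool set" m] by simp
    ultimately show ?thesis by (rule finite_subset)
  qed
  define CS where "CS = (\<lambda>(S,a). RelAt S (map idx a)) ` (SIGMA S:A-{R}. S)"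
  have "finite (SIGMA S:A-{R}. S)"
    by (rule finite_SigmaI) (use assms(1) finS in blast)+
  then have "finite CS" unfolding CS_def by (rule finite_imageI)
  then obtain cl where cl: "set cl = CS" using finite_list by blast
  define phi where "phi = RelAt R (map idx t) # cl"
  have ov: "\<forall>a\<in>set phi. atom_over (insert R A) a" unfolding phi_def using cl by (auto simp: CS_def)
  have "filter (uses_rel R) cl = []" unfolding filter_empty_conv using cl by (auto simp: CS_def)
  then have cnt: "length (filter (uses_rel R) phi) \<le> 1" unfolding phi_def by simp
  have mp: "map v (map idx a) = map (\<lambda>b. if b then v 0 else v 1) a" for v a
    by (simp add: idx_def)
  have "pp_rel 1 phi = {[True]}"
  proof
    show "{[True]} \<subseteq> pp_rel 1 phi"
    proof -
      define v :: "nat \<Rightarrow> bool" where "v i = (i = 0)" for i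
      have vb: "v \<circ> idx = id" by (auto simp: v_def idx_def fun_eq_iff)
      have "\<forall>a\<in>set phi. holds v a"
        unfolding phi_def using tR by (auto simp: cl CS_def vb)
      moreover have "[True] = map v [0..<1]" by (simp add: v_def)
      ultimately have "\<exists>w. [True] = map w [0..<1] \<and> (\<forall>a\<in>set phi. holds w a)" by (intro exI[of _ v] conjI)
      then have "[True] \<in> pp_rel 1 phi" unfolding pp_rel_def by (simp only: mem_Collect_eq)
      then show ?thesis by simp
    qed
  next
    show "pp_rel 1 phi \<subseteq> {[True]}"
    proof
      fix x assume "x \<in> pp_rel 1 phi"
      then obtain v where x: "x = map v [0..<1]" and hv: "\<forall>a\<in>set phi. holds v a"
        unfolding pp_rel_def by blast
      have "v 0"
      proof (rule ccontr)
        assume n0: "\<not> v 0"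
        have tt: "map (v \<circ> idx) t \<in> R" using hv by (simp add: phi_def)
        show False
        proof (cases "v 1")
          case False
          then have "v \<circ> idx = (\<lambda>b. False)" using n0 by (auto simp: idx_def fun_eq_iff)
          then have "map (\<lambda>b. False) t \<in> R" using tt by simp
          then have "replicate n False \<in> R" using tlen by (simp add: map_replicate_const)
          then show False using assms(6) by (simp add: zero_valid_def)
        next
          case True
          then have vn: "v \<circ> idx = Not" using n0 by (auto simp: idx_def fun_eq_iff)
          then have "map Not t \<in> R" using tt by simp
          moreover have "\<forall>S\<in>A-{R}. \<forall>a\<in>S. map Not a \<in> S"
          proof (intro ballI)
            fix S a assume "S \<in> A - {R}" "a \<in> S"
            then have "(S, a) \<in> (SIGMA S:A-{R}. S)" by (rule SigmaI)
            then have "RelAt S (map idx a) \<in> CS" unfolding CS_def by (rule rev_image_eqI) simp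
            then have "RelAt S (map idx a) \<in> set phi" by (simp add: phi_def cl)
            then have "holds v (RelAt S (map idx a))" using hv by blast
            then show "map Not a \<in> S" using vn by simp
          qed
          ultimately show False using tc by blast
        qed
      qed
      then show "x \<in> {[True]}" using x by simp
    qed
  qed
  then show ?thesis unfolding pp_clone_le1_def c1_def using ov cnt by blast
qed

end
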